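(* Let $n\ge 6$ be even. If $n\equiv 2\pmod 4$, no circulant or back-circulant Latin square of order $n$ with inner distance $\frac n2-1$ is a row product. If $n\equiv 0\pmod 4$, exactly $2$ circulant and exactly $2$ back-circulant Latin squares of order $n$ with inner distance $\frac n2-1$ and symbol $1$ in cell $(1,1)$ are row products.
   Context: Symbols are $[1,n]$; $\mathrm{dist}(a,b)$ is the minimum of the residues of $a-b$ and $b-a$ modulo $n$. The inner distance of a Latin square is the minimum of $\mathrm{dist}$ over symbols in horizontally or vertically adjacent cells. A circulant Latin square: each row $i+1$ is row $i$ cyclically shifted one position right; back-circulant: shifted one position left. For a Latin square $L=(m_{i,j})$, $H$ is the $n\times(n-1)$ matrix with $h_{i,j}\equiv m_{i,j+1}-m_{i,j}\pmod n$ and $V$ the $(n-1)\times n$ matrix with $v_{i,j}\equiv m_{i+1,j}-m_{i,j}\pmod n$ (entries in $[0,n-1]$). The difference row of a Latin row $(s_1,\dots,s_n)$ is $(h_1,\dots,h_{n-1})$ with $h_j\equiv s_{j+1}-s_j\pmod n$. A row product is a Latin square obtained by adding a constant mod $n$ to all entries of $\mathrm{prod}(d,d')$, the $n\times n$ matrix with $1$ in cell $(1,1)$ whose $H$ has every row equal to a difference row $d$ and whose $V$ has every column equal to a difference row $d'$. *)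

theory Defs
  imports Main
begin

text \<open>Squares of order n are functions L :: nat => nat => int; cells are (i,j) with
  0-based indices i,j < n (paper's cell (1,1) is (0,0)); symbols are the integers 1..n.\<close>

definition sym_dist :: "nat \<Rightarrow> int \<Rightarrow> int \<Rightarrow> int" where
  "sym_dist n a b = min ((a - b) mod int n) ((b - a) mod int n)"

definition latin_square :: "nat \<Rightarrow> (nat \<Rightarrow> nat \<Rightarrow> int) \<Rightarrow> bool" where
  "latin_square n L \<longleftrightarrow>
     (\<forall>i<n. \<forall>j<n. L i j \<in> {1..int n}) \<and>
     (\<forall>i<n. inj_on (L i) {..<n}) \<and>
     (\<forall>j<n. inj_on (\<lambda>i. L i j) {..<n})"

text \<open>Entries outside the n x n grid are fixed to 0, so that squares of order n
  form a finite set and can be counted.\<close>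
definition square_of_order :: "nat \<Rightarrow> (nat \<Rightarrow> nat \<Rightarrow> int) \<Rightarrow> bool" where
  "square_of_order n L \<longleftrightarrow> (\<forall>i j. (n \<le> i \<or> n \<le> j) \<longrightarrow> L i j = 0)"

definition inner_distance :: "nat \<Rightarrow> (nat \<Rightarrow> nat \<Rightarrow> int) \<Rightarrow> int" where
  "inner_distance n L = Min
     ({sym_dist n (L i j) (L i (j+1)) | i j. i < n \<and> j + 1 < n} \<union>
      {sym_dist n (L i j) (L (i+1) j) | i j. i + 1 < n \<and> j < n})"

definition circulant :: "nat \<Rightarrow> (nat \<Rightarrow> nat \<Rightarrow> int) \<Rightarrow> bool" where
  "circulant n L \<longleftrightarrow> (\<forall>i. i + 1 < n \<longrightarrow> (\<forall>j<n. L (i+1) ((j+1) mod n) = L i j))"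

definition back_circulant :: "nat \<Rightarrow> (nat \<Rightarrow> nat \<Rightarrow> int) \<Rightarrow> bool" where
  "back_circulant n L \<longleftrightarrow> (\<forall>i. i + 1 < n \<longrightarrow> (\<forall>j<n. L (i+1) j = L i ((j+1) mod n)))"

definition is_difference_row :: "nat \<Rightarrow> (nat \<Rightarrow> int) \<Rightarrow> bool" where
  "is_difference_row n d \<longleftrightarrow>
     (\<exists>s :: nat \<Rightarrow> int. (\<forall>j<n. s j \<in> {1..int n}) \<and> inj_on s {..<n} \<and>
        (\<forall>j. j + 1 < n \<longrightarrow> d j = (s (j+1) - s j) mod int n))"

text \<open>M is prod(d,d'): symbol 1 in cell (0,0), every row of H equal to d,
  every column of V equal to d'.\<close>
definition is_prod :: "nat \<Rightarrow> (nat \<Rightarrow> int) \<Rightarrow> (nat \<Rightarrow> int) \<Rightarrow> (nat \<Rightarrow> nat \<Rightarrow> int) \<Rightarrow> bool" where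
  "is_prod n d d' M \<longleftrightarrow>
     M 0 0 = 1 \<and> (\<forall>i<n. \<forall>j<n. M i j \<in> {1..int n}) \<and>
     (\<forall>i<n. \<forall>j. j + 1 < n \<longrightarrow> (M i (j+1) - M i j) mod int n = d j) \<and>
     (\<forall>i j. i + 1 < n \<longrightarrow> j < n \<longrightarrow> (M (i+1) j - M i j) mod int n = d' i)"

text \<open>L is obtained from prod(d,d') (d, d' difference rows) by adding a constant
  mod n to all entries (symbols kept in 1..n).\<close>
definition row_product :: "nat \<Rightarrow> (nat \<Rightarrow> nat \<Rightarrow> int) \<Rightarrow> bool" where
  "row_product n L \<longleftrightarrow>
     (\<exists>d d' M c. is_difference_row n d \<and> is_difference_row n d' \<and> is_prod n d d' M \<and>
        (\<forall>i<n. \<forall>j<n. L i j = (M i j - 1 + c) mod int n + 1))"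

end

theory Submission
  imports Defs
begin

lemma small_mult:
  fixes N k :: int
  assumes "\<bar>N * k\<bar> < N"
  shows "k = 0"
proof (rule ccontr)
  assume "k \<noteq> 0"
  hence "1 \<le> \<bar>k\<bar>" by simp
  have N: "0 < N" using assms by (meson abs_ge_zero le_less_trans)
  have "N * 1 \<le> N * \<bar>k\<bar>" using N \<open>1 \<le> \<bar>k\<bar>\<close> by (intro mult_left_mono) auto
  also have "\<dots> = \<bar>N * k\<bar>" using N by (simp add: abs_mult)
  finally show False using assms by simp
qed

lemma eq_from_mod:
  fixes a b :: int
  assumes "a \<in> {1..int n}" "b \<in> {1..int n}" "a mod int n = b mod int n"
  shows "a = b"
proof -
  have "int n dvd a - b" using assms(3) by (simp add: mod_eq_dvd_iff)
  then obtain k where k: "a - b = int n * k" by (auto elim: dvdE)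
  have "\<bar>a - b\<bar> < int n" using assms(1,2) by auto
  hence "k = 0" using k
    by (intro small_mult[of "int n"]) simp
  thus ?thesis using k by simp
qed

lemma inner_le:
  assumes "i < n" "j + 1 < n"
  shows "inner_distance n L \<le> sym_dist n (L i j) (L i (j+1))"
proof -
  let ?A = "{sym_dist n (L i j) (L i (j+1)) | i j. i < n \<and> j + 1 < n}"
  let ?B = "{sym_dist n (L i j) (L (i+1) j) | i j. i + 1 < n \<and> j < n}"
  have "?A \<subseteq> (\<lambda>(i,j). sym_dist n (L i j) (L i (j+1))) ` ({..<n} \<times> {..<n})" by auto
  hence fA: "finite ?A" by (rule finite_subset) auto
  have "?B \<subseteq> (\<lambda>(i,j). sym_dist n (L i j) (L (i+1) j)) ` ({..<n} \<times> {..<n})" by auto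
  hence fB: "finite ?B" by (rule finite_subset) auto
  have "sym_dist n (L i j) (L i (j+1)) \<in> ?A \<union> ?B" using assms by blast
  thus ?thesis unfolding inner_distance_def using fA fB by (intro Min_le) auto
qed

lemma inner_eq:
  assumes "2 \<le> n"
    and "\<And>i j. i < n \<Longrightarrow> j + 1 < n \<Longrightarrow> sym_dist n (L i j) (L i (j+1)) = v"
    and "\<And>i j. i + 1 < n \<Longrightarrow> j < n \<Longrightarrow> sym_dist n (L i j) (L (i+1) j) = v"
  shows "inner_distance n L = v"
proof -
  have "{sym_dist n (L i j) (L i (j+1)) | i j. i < n \<and> j + 1 < n} \<union>
      {sym_dist n (L i j) (L (i+1) j) | i j. i + 1 < n \<and> j < n} = {v}"
  proof
    have "sym_dist n (L 0 0) (L 0 (0+1)) = v" using assms(1) assms(2)[of 0 0] by simp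
    moreover have "0 < n" "0 + 1 < n" using assms(1) by auto
    ultimately have "v \<in> {sym_dist n (L i j) (L i (j+1)) | i j. i < n \<and> j + 1 < n}"
      by blast
    thus "{v} \<subseteq> {sym_dist n (L i j) (L i (j+1)) | i j. i < n \<and> j + 1 < n} \<union>
      {sym_dist n (L i j) (L (i+1) j) | i j. i + 1 < n \<and> j < n}" by blast
  qed (use assms in fastforce)
  thus ?thesis unfolding inner_distance_def by simp
qed

lemma coprime_h:
  fixes m r :: int
  assumes "r = 2*m - 1 \<or> r = 2*m + 1"
  shows "coprime r (4*m)"
proof (rule coprimeI)
  fix c assume c: "c dvd r" "c dvd 4*m"
  have "r*r - (if r = 2*m-1 then m-1 else m+1) * (4*m) = 1"
  proof (cases "r = 2*m-1")
    case True show ?thesis unfolding True by (simp add: algebra_simps)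
  next
    case False with assms have "r = 2*m+1" by auto
    hence "r = 2*m+1" .
    from False show ?thesis unfolding \<open>r = 2*m+1\<close> by (simp add: algebra_simps)
  qed
  moreover have "c dvd r*r - (if r = 2*m-1 then m-1 else m+1) * (4*m)"
    using dvd_diff[OF dvd_mult2[OF c(1)] dvd_mult[OF c(2)]] by blast
  ultimately show "is_unit c" by simp
qed



lemma diff_mod1:
  fixes X Y :: int
  shows "((X mod m + 1) - (Y mod m + 1)) mod m = (X - Y) mod m"
  by (simp add: mod_diff_eq)

lemma sym_dist_mod1:
  fixes X Y :: int
  shows "sym_dist n (X mod int n + 1) (Y mod int n + 1) = min ((X - Y) mod int n) ((Y - X) mod int n)"
  unfolding sym_dist_def by (simp add: mod_diff_eq)

lemma row0:
  assumes "1 < n" "row_product n L" "circulant n L \<or> back_circulant n L"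
  shows "\<exists>r. 0 \<le> r \<and> r < int n \<and> (\<forall>j. j+1<n \<longrightarrow> L 0 (j+1) mod int n = (L 0 j + r) mod int n)"
proof -
  obtain d d' M c where dd: "is_difference_row n d" "is_difference_row n d'" "is_prod n d d' M"
    and L: "\<forall>i<n. \<forall>j<n. L i j = (M i j - 1 + c) mod int n + 1"
    using assms(2) unfolding row_product_def by blast
  have vert: "(L 1 j - L 0 j) mod int n = d' 0" if "j < n" for j
  proof -
    have "L 1 j = (M 1 j - 1 + c) mod int n + 1" "L 0 j = (M 0 j - 1 + c) mod int n + 1"
      using L that assms(1) by auto
    hence "(L 1 j - L 0 j) mod int n = ((M 1 j - 1 + c) mod int n + 1 - ((M 0 j - 1 + c) mod int n + 1)) mod int n"
      by simp
    also have "\<dots> = ((M 1 j - 1 + c) - (M 0 j - 1 + c)) mod int n" by (rule diff_mod1)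
    also have "\<dots> = (M (0+1) j - M 0 j) mod int n" by simp
    also have "\<dots> = d' 0"
      using conjunct2[OF conjunct2[OF conjunct2[OF dd(3)[unfolded is_prod_def]]], rule_format, of 0 j] that assms(1)
      by simp
    finally show ?thesis .
  qed
  show ?thesis
    using assms(3)
  proof
    assume circ: "circulant n L"
    show ?thesis
    proof (intro exI conjI allI impI)
      show "0 \<le> (- d' 0) mod int n" "(- d' 0) mod int n < int n" using assms(1) by auto
      fix j assume j: "j + 1 < n"
      have "L (0+1) ((j+1) mod n) = L 0 j" using circ[unfolded circulant_def, rule_format, of 0 j] j by simp
      hence e: "L 1 (j+1) = L 0 j" using j by simp
      have "(L 0 j - L 0 (j+1)) mod int n = d' 0" using vert[of "j+1"] e j by simp
      hence "(L 0 j - (L 0 j - L 0 (j+1))) mod int n = (L 0 j - d' 0) mod int n"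
        by (metis mod_diff_right_eq)
      thus "L 0 (j+1) mod int n = (L 0 j + (- d' 0) mod int n) mod int n"
        by (simp add: mod_add_right_eq)
    qed
  next
    assume circ: "back_circulant n L"
    show ?thesis
    proof (intro exI conjI allI impI)
      show "0 \<le> (d' 0) mod int n" "(d' 0) mod int n < int n" using assms(1) by auto
      fix j assume j: "j + 1 < n"
      have "L (0+1) j = L 0 ((j+1) mod n)" using circ[unfolded back_circulant_def, rule_format, of 0 j] j by simp
      hence e: "L 1 j = L 0 (j+1)" using j by simp
      have "(L 0 (j+1) - L 0 j) mod int n = d' 0" using vert[of "j"] e j by simp
      hence "(L 0 j + (L 0 (j+1) - L 0 j)) mod int n = (L 0 j + d' 0) mod int n"
        by (metis mod_add_right_eq)
      thus "L 0 (j+1) mod int n = (L 0 j + (d' 0) mod int n) mod int n"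
        by (simp add: mod_add_right_eq)
    qed
  qed
qed

lemma row0_closed:
  fixes s :: "nat \<Rightarrow> int"
  assumes "\<forall>j. j+1<n \<longrightarrow> s (j+1) mod int n = (s j + r) mod int n"
  shows "j < n \<Longrightarrow> s j mod int n = (s 0 + int j * r) mod int n"
proof (induction j)
  case 0 then show ?case by simp
next
  case (Suc j)
  have "s (Suc j) mod int n = (s j + r) mod int n" using assms Suc.prems by auto
  also have "\<dots> = (s j mod int n + r) mod int n" by (simp add: mod_add_left_eq)
  also have "\<dots> = ((s 0 + int j * r) mod int n + r) mod int n" using Suc by simp
  also have "\<dots> = (s 0 + int j * r + r) mod int n" by (rule mod_add_left_eq)
  also have "\<dots> = (s 0 + int (Suc j) * r) mod int n" by (simp add: algebra_simps)
  finally show ?case .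
qed

lemma no_repeat:
  fixes s :: "nat \<Rightarrow> int"
  assumes "\<forall>j<n. s j \<in> {1..int n}" "inj_on s {..<n}"
    "\<And>j. j < n \<Longrightarrow> s j mod int n = (s 0 + int j * r) mod int n"
    "0 < k" "k < n" "int n dvd int k * r"
  shows False
proof -
  have "s k mod int n = (s 0 + int k * r) mod int n" using assms(3,5) by simp
  also have "\<dots> = s 0 mod int n" using assms(6)
    by (metis add.right_neutral dvd_imp_mod_0 mod_add_right_eq)
  finally have "s k = s 0" using assms(1,4,5) eq_from_mod by (metis gr_implies_not0 not_gr0)
  thus False using assms(2,4,5) by (metis inj_on_def lessThan_iff not_gr0 gr_implies_not0 less_trans)
qed


lemma lin_inj:
  fixes a c :: int
  assumes "coprime (int n) a"
  shows "inj_on (\<lambda>j. (int j * a + c) mod int n + 1) {..<n}"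
proof (rule inj_onI)
  fix x y assume x: "x \<in> {..<n}" and y: "y \<in> {..<n}"
    and e: "(int x * a + c) mod int n + 1 = (int y * a + c) mod int n + 1"
  hence "int n dvd (int x * a + c) - (int y * a + c)" by (simp add: mod_eq_dvd_iff)
  hence "int n dvd (int x - int y) * a" by (simp add: algebra_simps)
  hence "int n dvd (int x - int y)" using assms coprime_dvd_mult_left_iff by blast
  then obtain k where k: "int x - int y = int n * k" by (auto elim: dvdE)
  have "\<bar>int x - int y\<bar> < int n" using x y by auto
  hence "k = 0" using k
    by (intro small_mult[of "int n"]) simp
  thus "x = y" using k by simp
qed

definition lin :: "nat \<Rightarrow> int \<Rightarrow> int \<Rightarrow> nat \<Rightarrow> nat \<Rightarrow> int" where
  "lin n a b = (\<lambda>i j. if i < n \<and> j < n then (int j * a + int i * b) mod int n + 1 else 0)"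

lemma lin_latin:
  assumes "0 < n" "coprime (int n) a" "coprime (int n) b"
  shows "latin_square n (lin n a b)"
  unfolding latin_square_def
proof (intro conjI allI impI)
  fix i j assume "i < n" "j < n"
  thus "lin n a b i j \<in> {1..int n}" using assms(1) unfolding lin_def
    by (simp add: pos_mod_bound pos_mod_sign add1_zle_eq)
next
  fix i assume i: "i < n"
  have "inj_on (\<lambda>j. (int j * a + int i * b) mod int n + 1) {..<n}" by (rule lin_inj[OF assms(2)])
  thus "inj_on (lin n a b i) {..<n}" using i unfolding lin_def inj_on_def by auto
next
  fix j assume j: "j < n"
  have "inj_on (\<lambda>i. (int i * b + int j * a) mod int n + 1) {..<n}" by (rule lin_inj[OF assms(3)])
  thus "inj_on (\<lambda>i. lin n a b i j) {..<n}" using j unfolding lin_def inj_on_def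
    by (auto simp: add.commute)
qed

lemma lin_circ:
  assumes "0 < n"
  shows "circulant n (lin n a (-a))"
  unfolding circulant_def
proof (intro allI impI)
  fix i j assume i: "i + 1 < n" and j: "j < n"
  have "int ((j+1) mod n) = (int j + 1) mod int n" using zmod_int[of "j+1" n] by (simp add: add.commute)
  hence "(int ((j+1) mod n) * a + int (i+1) * (-a)) mod int n
       = ((int j + 1) mod int n * a + int (i+1) * (-a)) mod int n" by simp
  also have "\<dots> = ((int j + 1) * a + int (i+1) * (-a)) mod int n"
    by (metis mod_add_left_eq mod_mult_left_eq)
  also have "\<dots> = (int j * a + int i * (-a)) mod int n" by (simp add: algebra_simps)
  finally show "lin n a (-a) (i+1) ((j+1) mod n) = lin n a (-a) i j"
    using i j assms unfolding lin_def by simp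
qed

lemma lin_back:
  assumes "0 < n"
  shows "back_circulant n (lin n a a)"
  unfolding back_circulant_def
proof (intro allI impI)
  fix i j assume i: "i + 1 < n" and j: "j < n"
  have "int ((j+1) mod n) = (int j + 1) mod int n" using zmod_int[of "j+1" n] by (simp add: add.commute)
  hence "(int ((j+1) mod n) * a + int i * a) mod int n
       = ((int j + 1) mod int n * a + int i * a) mod int n" by simp
  also have "\<dots> = ((int j + 1) * a + int i * a) mod int n"
    by (metis mod_add_left_eq mod_mult_left_eq)
  also have "\<dots> = (int j * a + int (i+1) * a) mod int n" by (simp add: algebra_simps)
  finally show "lin n a a (i+1) j = lin n a a i ((j+1) mod n)"
    using i j assms unfolding lin_def by simp
qed

lemma diffrow_const:
  assumes "0 < n" "coprime (int n) a"
  shows "is_difference_row n (\<lambda>_. a mod int n)"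
proof -
  define s where "s = (\<lambda>j. (int j * a + 0) mod int n + 1)"
  have 1: "\<forall>j<n. s j \<in> {1..int n}" using assms(1) unfolding s_def
    by (simp add: pos_mod_bound pos_mod_sign add1_zle_eq)
  have 2: "inj_on s {..<n}" unfolding s_def by (rule lin_inj[OF assms(2)])
  have 3: "a mod int n = (s (j+1) - s j) mod int n" for j
  proof -
    have "(s (j+1) - s j) mod int n = ((int (j+1) * a + 0) - (int j * a + 0)) mod int n"
      unfolding s_def by (rule diff_mod1)
    thus ?thesis by (simp add: algebra_simps)
  qed
  show ?thesis unfolding is_difference_row_def using 1 2 3 by blast
qed

lemma lin_rowprod:
  assumes "0 < n" "coprime (int n) a" "coprime (int n) b"
  shows "row_product n (lin n a b)"
  unfolding row_product_def
proof (intro exI conjI allI impI)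
  show "is_difference_row n (\<lambda>_. a mod int n)" by (rule diffrow_const[OF assms(1,2)])
  show "is_difference_row n (\<lambda>_. b mod int n)" by (rule diffrow_const[OF assms(1,3)])
  show "is_prod n (\<lambda>_. a mod int n) (\<lambda>_. b mod int n) (lin n a b)"
    unfolding is_prod_def
  proof (intro conjI allI impI)
    show "lin n a b 0 0 = 1" using assms(1) unfolding lin_def by simp
    fix i j assume "i < n" "j < n"
    thus "lin n a b i j \<in> {1..int n}" using assms(1) unfolding lin_def
      by (simp add: pos_mod_bound pos_mod_sign add1_zle_eq)
  next
    fix i j assume i: "i < n" and j: "j + 1 < n"
    have "(lin n a b i (j+1) - lin n a b i j) mod int n =
      ((int (j+1) * a + int i * b) - (int j * a + int i * b)) mod int n"
      using i j unfolding lin_def by (simp add: mod_diff_eq)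
    thus "(lin n a b i (j+1) - lin n a b i j) mod int n = a mod int n" by (simp add: algebra_simps)
  next
    fix i j assume i: "i + 1 < n" and j: "j < n"
    have "(lin n a b (i+1) j - lin n a b i j) mod int n =
      ((int j * a + int (i+1) * b) - (int j * a + int i * b)) mod int n"
      using i j unfolding lin_def by (simp add: mod_diff_eq)
    thus "(lin n a b (i+1) j - lin n a b i j) mod int n = b mod int n" by (simp add: algebra_simps)
  qed
  fix i j assume "i < n" "j < n"
  thus "lin n a b i j = (lin n a b i j - 1 + 0) mod int n + 1" unfolding lin_def by simp
qed


lemma sd_r:
  fixes x y r :: int
  assumes "y mod int n = (x + r) mod int n"
  shows "sym_dist n x y = min ((-r) mod int n) (r mod int n)"
proof -
  have "(y - x) mod int n = (y mod int n - x) mod int n" by (simp add: mod_diff_left_eq)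
  also have "\<dots> = ((x + r) mod int n - x) mod int n" using assms by simp
  also have "\<dots> = r mod int n" by (simp add: mod_diff_left_eq)
  finally have 1: "(y - x) mod int n = r mod int n" .
  have "(x - y) mod int n = (x - y mod int n) mod int n" by (simp add: mod_diff_right_eq)
  also have "\<dots> = (x - (x + r) mod int n) mod int n" using assms by simp
  also have "\<dots> = (-r) mod int n" by (simp add: mod_diff_right_eq)
  finally have 2: "(x - y) mod int n = (-r) mod int n" .
  show ?thesis unfolding sym_dist_def 1 2 ..
qed

lemma r_range:
  fixes r h :: int
  assumes "0 \<le> r" "r < int n" "int n = 2*h" "3 \<le> h" "h - 1 \<le> min ((-r) mod int n) (r mod int n)"
  shows "h - 1 \<le> r \<and> r \<le> h + 1"
proof (cases "r = 0")
  case True thus ?thesis using assms by simp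
next
  case False
  have "(-r) mod int n = (int n - r) mod int n" using mod_add_self1[of "int n" "-r"] by simp
  also have "\<dots> = int n - r" using assms(1,2) False by (intro mod_pos_pos_trivial) auto
  finally have "(-r) mod int n = int n - r" .
  moreover have "r mod int n = r" using assms(1,2) by (intro mod_pos_pos_trivial) auto
  ultimately show ?thesis using assms by auto
qed

lemma mind:
  fixes a m :: int
  assumes "int n = 4*m" "1 \<le> m" "a = 2*m - 1 \<or> a = 2*m + 1"
  shows "min ((-a) mod int n) (a mod int n) = 2*m - 1"
proof -
  have "(-a) mod int n = (int n - a) mod int n" using mod_add_self1[of "int n" "-a"] by simp
  also have "\<dots> = int n - a" using assms by (intro mod_pos_pos_trivial) auto
  finally have "(-a) mod int n = int n - a" .
  moreover have "a mod int n = a" using assms by (intro mod_pos_pos_trivial) auto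
  ultimately show ?thesis using assms by auto
qed

lemma shift_mod:
  fixes X a m :: int
  shows "((X + a) mod m + 1) mod m = ((X mod m + 1) + a) mod m"
proof -
  have "((X + a) mod m + 1) mod m = (X + a + 1) mod m" by (rule mod_add_left_eq)
  moreover have "((X mod m + 1) + a) mod m = (X mod m + (1 + a)) mod m" by (simp add: algebra_simps)
  moreover have "\<dots> = (X + (1 + a)) mod m" by (rule mod_add_left_eq)
  ultimately show ?thesis by (simp add: algebra_simps)
qed

lemma lin_inner:
  fixes a b m :: int
  assumes "int n = 4*m" "1 \<le> m" "a = 2*m - 1 \<or> a = 2*m + 1" "b = a \<or> b = -a"
  shows "inner_distance n (lin n a b) = 2*m - 1"
proof (rule inner_eq)
  show "2 \<le> n" using assms by linarith
  have mb: "min ((-b) mod int n) (b mod int n) = 2*m - 1"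
    using assms(4)
  proof
    assume "b = a" thus ?thesis using mind[OF assms(1-3)] by simp
  next
    assume "b = -a" thus ?thesis using mind[OF assms(1-3)] by (simp add: min.commute)
  qed
  fix i j
  { assume i: "i < n" and j: "j + 1 < n"
    have "(int (j+1) * a + int i * b) mod int n = ((int j * a + int i * b) + a) mod int n"
      by (simp add: algebra_simps)
    hence "sym_dist n (lin n a b i j) (lin n a b i (j+1)) = min ((-a) mod int n) (a mod int n)"
      using i j unfolding lin_def by (intro sd_r) (simp only: shift_mod if_True conj_absorb, simp)
    thus "sym_dist n (lin n a b i j) (lin n a b i (j+1)) = 2*m - 1" using mind[OF assms(1-3)] by simp }
  { assume i: "i + 1 < n" and j: "j < n"
    have "(int j * a + int (i+1) * b) mod int n = ((int j * a + int i * b) + b) mod int n"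
      by (simp add: algebra_simps)
    hence "sym_dist n (lin n a b i j) (lin n a b (i+1) j) = min ((-b) mod int n) (b mod int n)"
      using i j unfolding lin_def by (intro sd_r) (simp only: shift_mod if_True conj_absorb, simp)
    thus "sym_dist n (lin n a b i j) (lin n a b (i+1) j) = 2*m - 1" using mb by simp }
qed

lemma circ_unique:
  assumes "0 < n" "circulant n L" "circulant n L'" "\<forall>j<n. L 0 j = L' 0 j"
  shows "i < n \<Longrightarrow> \<forall>j<n. L i j = L' i j"
proof (induction i)
  case 0 thus ?case using assms by simp
next
  case (Suc i)
  show ?case
  proof (intro allI impI)
    fix j assume j: "j < n"
    define j0 where "j0 = (j + n - 1) mod n"
    have j0: "j0 < n" unfolding j0_def using assms(1) by simp
    have "(j0 + 1) mod n = (j + n - 1 + 1) mod n" unfolding j0_def by (rule mod_add_left_eq)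
    also have "j + n - 1 + 1 = j + n" using assms(1) by simp
    also have "(j + n) mod n = j" using j by simp
    finally have jj: "(j0 + 1) mod n = j" .
    have "L (i+1) ((j0+1) mod n) = L i j0" using assms(2) Suc.prems j0 unfolding circulant_def by simp
    moreover have "L' (i+1) ((j0+1) mod n) = L' i j0" using assms(3) Suc.prems j0 unfolding circulant_def by simp
    moreover have "L i j0 = L' i j0" using Suc j0 by simp
    ultimately show "L (Suc i) j = L' (Suc i) j" using jj by simp
  qed
qed

lemma back_unique:
  assumes "0 < n" "back_circulant n L" "back_circulant n L'" "\<forall>j<n. L 0 j = L' 0 j"
  shows "i < n \<Longrightarrow> \<forall>j<n. L i j = L' i j"
proof (induction i)
  case 0 thus ?case using assms by simp
next
  case (Suc i)
  show ?case
  proof (intro allI impI)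
    fix j assume j: "j < n"
    have "L (i+1) j = L i ((j+1) mod n)" using assms(2) Suc.prems j unfolding back_circulant_def by simp
    moreover have "L' (i+1) j = L' i ((j+1) mod n)" using assms(3) Suc.prems j unfolding back_circulant_def by simp
    moreover have "L i ((j+1) mod n) = L' i ((j+1) mod n)" using Suc assms(1) by simp
    ultimately show "L (Suc i) j = L' (Suc i) j" by simp
  qed
qed


lemma first_row:
  assumes n6: "6 \<le> n" and lat: "latin_square n L" and cb: "circulant n L \<or> back_circulant n L"
    and inn: "inner_distance n L = int n div 2 - 1" and rp: "row_product n L"
    and n2: "int n = 2 * h"
  shows "\<exists>r. (r = h - 1 \<or> r = h + 1) \<and> (\<forall>j<n. L 0 j mod int n = (L 0 0 + int j * r) mod int n)"
proof -
  obtain r where r: "0 \<le> r" "r < int n" and rec: "\<forall>j. j+1<n \<longrightarrow> L 0 (j+1) mod int n = (L 0 j + r) mod int n"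
    using row0[OF _ rp cb] n6 by auto
  have cl: "\<And>j. j < n \<Longrightarrow> L 0 j mod int n = (L 0 0 + int j * r) mod int n"
    using row0_closed[OF rec] by blast
  have h: "int n div 2 = h" "3 \<le> h" using n2 n6 by auto
  have "inner_distance n L \<le> sym_dist n (L 0 0) (L 0 (0+1))" using n6 by (intro inner_le) auto
  also have "\<dots> = min ((-r) mod int n) (r mod int n)" using rec n6 by (intro sd_r) auto
  finally have rr: "h - 1 \<le> r \<and> r \<le> h + 1" using inn h r n2 by (intro r_range) auto
  have ent: "\<forall>j<n. L 0 j \<in> {1..int n}" and inj: "inj_on (L 0) {..<n}"
    using lat n6 unfolding latin_square_def by auto
  have "r \<noteq> h"
  proof
    assume "r = h"
    hence "int n dvd int 2 * r" using n2 by simp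
    thus False using no_repeat[OF ent inj cl, of 2] n6 by auto
  qed
  hence "r = h - 1 \<or> r = h + 1" using rr by auto
  thus ?thesis using cl by blast
qed

lemma part1:
  assumes n6: "6 \<le> n" and n4: "n mod 4 = 2" and lat: "latin_square n L"
    and cb: "circulant n L \<or> back_circulant n L"
    and inn: "inner_distance n L = int n div 2 - 1" and rp: "row_product n L"
  shows False
proof -
  define h where "h = int n div 2"
  obtain t where t: "int n = 4 * t + 2" using n4
    by (metis mod_div_mult_eq add.commute mult.commute of_nat_add of_nat_mult of_nat_numeral)
  have n2: "int n = 2 * h" unfolding h_def using t by simp
  have ht: "h = 2 * t + 1" unfolding h_def using t by simp
  obtain r where r: "r = h - 1 \<or> r = h + 1" and cl: "\<forall>j<n. L 0 j mod int n = (L 0 0 + int j * r) mod int n"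
    using first_row[OF n6 lat cb inn rp n2] by blast
  have ent: "\<forall>j<n. L 0 j \<in> {1..int n}" and inj: "inj_on (L 0) {..<n}"
    using lat n6 unfolding latin_square_def by auto
  obtain u where u: "r = 2 * u" using r ht by (metis add_diff_cancel_right' mult_2 add.assoc add.commute diff_add_cancel)
  have "int (nat h) * r = int n * u" using n2 u ht by simp
  hence dv: "int n dvd int (nat h) * r" by simp
  have "6 \<le> int n" using n6 by simp
  hence hh: "0 < h" "h < int n" using ht t by auto
  have k1: "0 < nat h" using hh by simp
  have k2: "nat h < n" using hh by (simp add: nat_less_iff)
  have cl': "\<And>j. j < n \<Longrightarrow> L 0 j mod int n = (L 0 0 + int j * r) mod int n" using cl by blast
  show False by (rule no_repeat[OF ent inj cl' k1 k2 dv])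
qed

lemma lin_member:
  fixes a b m :: int
  assumes "int n = 4*m" "2 \<le> m" "a = 2*m - 1 \<or> a = 2*m + 1" "b = a \<or> b = -a"
  shows "square_of_order n (lin n a b) \<and> latin_square n (lin n a b) \<and>
     inner_distance n (lin n a b) = int n div 2 - 1 \<and> lin n a b 0 0 = 1 \<and> row_product n (lin n a b)"
proof -
  have n0: "0 < n" using assms by linarith
  have ca: "coprime (int n) a" using coprime_h[OF assms(3)] assms(1) by (simp add: coprime_commute)
  have cb: "coprime (int n) b" using assms(4) ca by auto
  show ?thesis
  proof (intro conjI)
    show "square_of_order n (lin n a b)" unfolding square_of_order_def lin_def by auto
    show "latin_square n (lin n a b)" by (rule lin_latin[OF n0 ca cb])
    show "inner_distance n (lin n a b) = int n div 2 - 1"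
      using lin_inner[OF assms(1) _ assms(3,4)] assms(1,2) by simp
    show "lin n a b 0 0 = 1" using n0 unfolding lin_def by simp
    show "row_product n (lin n a b)" by (rule lin_rowprod[OF n0 ca cb])
  qed
qed

lemma lin_row0:
  assumes "j < n" shows "lin n a b 0 j = (int j * a) mod int n + 1"
  using assms unfolding lin_def by simp

lemma card_two:
  fixes m :: int
  assumes "int n = 4*m" "2 \<le> m"
  shows "card {lin n (2*m-1) b1, lin n (2*m+1) b2} = 2"
proof -
  have n1: "1 < n" using assms by linarith
  have "lin n (2*m-1) b1 0 1 = (2*m-1) mod int n + 1" using n1 unfolding lin_def by simp
  also have "\<dots> = 2*m" using assms by (subst mod_pos_pos_trivial) auto
  finally have 1: "lin n (2*m-1) b1 0 1 = 2*m" .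
  have "lin n (2*m+1) b2 0 1 = (2*m+1) mod int n + 1" using n1 unfolding lin_def by simp
  also have "\<dots> = 2*m+2" using assms by (subst mod_pos_pos_trivial) auto
  finally have 2: "lin n (2*m+1) b2 0 1 = 2*m+2" .
  have "lin n (2*m-1) b1 \<noteq> lin n (2*m+1) b2" using 1 2 by (metis add_cancel_left_right zero_neq_numeral)
  thus ?thesis by simp
qed


lemma row0_eq:
  assumes n0: "0 < n" and lat: "latin_square n L" and L00: "L 0 0 = 1"
    and cl: "\<forall>j<n. L 0 j mod int n = (L 0 0 + int j * r) mod int n"
  shows "\<forall>j<n. L 0 j = lin n r b 0 j"
proof (intro allI impI)
  fix j assume j: "j < n"
  have "L 0 j \<in> {1..int n}" using lat j n0 unfolding latin_square_def by auto
  moreover have "lin n r b 0 j \<in> {1..int n}" using lin_row0[OF j] n0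
    by (simp add: pos_mod_bound pos_mod_sign add1_zle_eq)
  moreover have "lin n r b 0 j mod int n = (1 + int j * r) mod int n"
  proof -
    have "lin n r b 0 j mod int n = ((int j * r) mod int n + 1) mod int n" using lin_row0[OF j] by simp
    also have "\<dots> = (int j * r + 1) mod int n" by (rule mod_add_left_eq)
    finally show ?thesis by (simp add: add.commute)
  qed
  ultimately show "L 0 j = lin n r b 0 j" using cl j L00 eq_from_mod by metis
qed

lemma get_m:
  assumes "6 \<le> n" "n mod 4 = 0"
  obtains m :: int where "int n = 4*m" "2 \<le> m" "int n div 2 = 2*m"
proof -
  obtain k where "n = 4 * k" using assms(2) by auto
  thus ?thesis using that[of "int k"] assms(1) by simp
qed

lemma set_circ:
  assumes n6: "6 \<le> n" and n4: "n mod 4 = 0" and m: "int n = 4*m" "2 \<le> m"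
  shows "{L. square_of_order n L \<and> latin_square n L \<and> circulant n L \<and>
             inner_distance n L = int n div 2 - 1 \<and> L 0 0 = 1 \<and> row_product n L}
       = {lin n (2*m-1) (-(2*m-1)), lin n (2*m+1) (-(2*m+1))}" (is "?S = ?T")
proof
  have n0: "0 < n" using n6 by simp
  show "?T \<subseteq> ?S"
  proof
    fix L assume "L \<in> ?T"
    then obtain a where a: "a = 2*m - 1 \<or> a = 2*m + 1" and La: "L = lin n a (-a)" by blast
    show "L \<in> ?S" using lin_member[OF m a, of "-a"] lin_circ[OF n0, of a] La by simp
  qed
  show "?S \<subseteq> ?T"
  proof
    fix L assume "L \<in> ?S"
    hence sq: "square_of_order n L" and lat: "latin_square n L" and circ: "circulant n L"
      and inn: "inner_distance n L = int n div 2 - 1" and L00: "L 0 0 = 1" and rp: "row_product n L"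
      by auto
    have n2: "int n = 2 * (2*m)" using m by simp
    obtain r where r: "r = 2*m - 1 \<or> r = 2*m + 1"
      and cl: "\<forall>j<n. L 0 j mod int n = (L 0 0 + int j * r) mod int n"
      using first_row[OF n6 lat _ inn rp n2] circ by auto
    have row: "\<forall>j<n. L 0 j = lin n r (-r) 0 j" by (rule row0_eq[OF n0 lat L00 cl])
    have "L = lin n r (-r)"
    proof (intro ext)
      fix i j
      show "L i j = lin n r (-r) i j"
      proof (cases "i < n \<and> j < n")
        case True thus ?thesis using circ_unique[OF n0 circ lin_circ[OF n0] row] by blast
      next
        case False thus ?thesis using sq unfolding square_of_order_def lin_def by auto
      qed
    qed
    thus "L \<in> ?T" using r by auto
  qed
qed

lemma set_back:
  assumes n6: "6 \<le> n" and n4: "n mod 4 = 0" and m: "int n = 4*m" "2 \<le> m"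
  shows "{L. square_of_order n L \<and> latin_square n L \<and> back_circulant n L \<and>
             inner_distance n L = int n div 2 - 1 \<and> L 0 0 = 1 \<and> row_product n L}
       = {lin n (2*m-1) (2*m-1), lin n (2*m+1) (2*m+1)}" (is "?S = ?T")
proof
  have n0: "0 < n" using n6 by simp
  show "?T \<subseteq> ?S"
  proof
    fix L assume "L \<in> ?T"
    then obtain a where a: "a = 2*m - 1 \<or> a = 2*m + 1" and La: "L = lin n a a" by blast
    show "L \<in> ?S" using lin_member[OF m a, of "a"] lin_back[OF n0, of a] La by simp
  qed
  show "?S \<subseteq> ?T"
  proof
    fix L assume "L \<in> ?S"
    hence sq: "square_of_order n L" and lat: "latin_square n L" and circ: "back_circulant n L"
      and inn: "inner_distance n L = int n div 2 - 1" and L00: "L 0 0 = 1" and rp: "row_product n L"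
      by auto
    have n2: "int n = 2 * (2*m)" using m by simp
    obtain r where r: "r = 2*m - 1 \<or> r = 2*m + 1"
      and cl: "\<forall>j<n. L 0 j mod int n = (L 0 0 + int j * r) mod int n"
      using first_row[OF n6 lat _ inn rp n2] circ by auto
    have row: "\<forall>j<n. L 0 j = lin n r r 0 j" by (rule row0_eq[OF n0 lat L00 cl])
    have "L = lin n r r"
    proof (intro ext)
      fix i j
      show "L i j = lin n r r i j"
      proof (cases "i < n \<and> j < n")
        case True thus ?thesis using back_unique[OF n0 circ lin_back[OF n0] row] by blast
      next
        case False thus ?thesis using sq unfolding square_of_order_def lin_def by auto
      qed
    qed
    thus "L \<in> ?T" using r by auto
  qed
qed

theorem mainTheorem13:
  fixes n :: nat
  assumes "n \<ge> 6" and "even n"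
  shows "(n mod 4 = 2 \<longrightarrow>
            (\<forall>L. latin_square n L \<and> (circulant n L \<or> back_circulant n L) \<and>
                 inner_distance n L = int n div 2 - 1 \<longrightarrow> \<not> row_product n L)) \<and>
         (n mod 4 = 0 \<longrightarrow>
            card {L. square_of_order n L \<and> latin_square n L \<and> circulant n L \<and>
                     inner_distance n L = int n div 2 - 1 \<and> L 0 0 = 1 \<and> row_product n L} = 2 \<and>
            card {L. square_of_order n L \<and> latin_square n L \<and> back_circulant n L \<and>
                     inner_distance n L = int n div 2 - 1 \<and> L 0 0 = 1 \<and> row_product n L} = 2)"
proof (intro conjI impI allI)
  fix L assume "n mod 4 = 2" and "latin_square n L \<and> (circulant n L \<or> back_circulant n L) \<and>
                 inner_distance n L = int n div 2 - 1"
  thus "\<not> row_product n L" using part1[OF assms(1)] by blast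
next
  assume n4: "n mod 4 = 0"
  obtain m :: int where m: "int n = 4*m" "2 \<le> m" using get_m[OF assms(1) n4] by metis
  show "card {L. square_of_order n L \<and> latin_square n L \<and> circulant n L \<and>
                     inner_distance n L = int n div 2 - 1 \<and> L 0 0 = 1 \<and> row_product n L} = 2"
    unfolding set_circ[OF assms(1) n4 m] by (rule card_two[OF m])
  show "card {L. square_of_order n L \<and> latin_square n L \<and> back_circulant n L \<and>
                     inner_distance n L = int n div 2 - 1 \<and> L 0 0 = 1 \<and> row_product n L} = 2"
    unfolding set_back[OF assms(1) n4 m] by (rule card_two[OF m])
qed

end
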